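(* For every regular matroid $\mathcal M$ (with fixed TU representing matrix $M$), the face poset $\mathcal{FP}^c(\mathcal M)$ of the Voronoi cell at $0$ of the lattice of integer cuts $\Gamma(\mathcal M)$ is isomorphic to the poset $\mathcal{CAC}(\mathcal M)$ of coherent acyclic orientations of submatroids of $\mathcal M$.
   Context: Let $\mathcal M$ be a regular matroid on a finite ground set $E$, represented over $\mathbb R$ by a totally unimodular matrix $M$ with columns $c_e$, $e\in E$; $\mathbb R^E$ has standard basis $\{e\}$ and Euclidean inner product. The lattice of integer cuts is $\Gamma(\mathcal M)=\operatorname{Row}(M)\cap\mathbb Z^E$ with the inherited inner product. Its Voronoi cell at $0$ is $\{x\in\operatorname{Row}(M):\|x\|\le\|x-\mu\|\ \forall\mu\in\Gamma(\mathcal M)\}$, and $\mathcal{FP}^c(\mathcal M)$ is the poset of its nonempty faces ordered by inclusion. An oriented submatroid is a pair $(S,\varepsilon)$ with $S\subseteq E$, $\varepsilon:S\to\{\pm1\}$; let $M^\varepsilon$ be obtained from $M$ by replacing $c_f$ by $\varepsilon_f c_f$ for $f\in S$. $(S,\varepsilon)$ is coherent acyclic if for every $e\in S$ there is $z\in\mathbb Z_{\ge0}^E$ supported in $S$ with $e+z\in\operatorname{Row}(M^\varepsilon)\cap\mathbb Z^E$. $\mathcal{CAC}(\mathcal M)$ is the set of coherent acyclic oriented submatroids ordered by $(S,\varepsilon)\le(S',\varepsilon')$ iff $S'\subseteq S$ and $\varepsilon'=\varepsilon|_{S'}$. *)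

theory Defs
  imports "HOL-Analysis.Analysis"
begin

text \<open>A real matrix with rows indexed by the finite type 'r and columns indexed by
  the finite ground set (type) 'e. The column c_e of M is (\<lambda>r. M $ r $ e).\<close>

definition subdet :: "real^'e^'r \<Rightarrow> nat \<Rightarrow> (nat \<Rightarrow> 'r) \<Rightarrow> (nat \<Rightarrow> 'e) \<Rightarrow> real" where
  "subdet M k f g = (\<Sum>p\<in>{p. p permutes {..<k}}. of_int (sign p) * (\<Prod>i<k. M $ f i $ g (p i)))"

text \<open>Totally unimodular: every square submatrix has determinant in {-1,0,1}.
  (Non-injective row/column choices give determinant 0 anyway.)\<close>
definition totally_unimodular :: "real^'e^'r \<Rightarrow> bool" where
  "totally_unimodular M \<longleftrightarrow> (\<forall>k f g. subdet M k f g \<in> {-1, 0, 1})"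

definition row_space :: "real^'e^'r \<Rightarrow> (real^'e) set" where
  "row_space M = {x. \<exists>c :: real^'r. \<forall>e. x $ e = (\<Sum>r\<in>UNIV. c $ r * M $ r $ e)}"

definition integer_vectors :: "(real^'e) set" where
  "integer_vectors = {x. \<forall>e. x $ e \<in> \<int>}"

definition cut_lattice :: "real^'e^'r \<Rightarrow> (real^'e) set" where
  "cut_lattice M = row_space M \<inter> integer_vectors"

definition voronoi_cell :: "real^'e^'r \<Rightarrow> (real^'e) set" where
  "voronoi_cell M = {x \<in> row_space M. \<forall>\<mu> \<in> cut_lattice M. norm x \<le> norm (x - \<mu>)}"

definition face_poset :: "real^'e^'r \<Rightarrow> (real^'e) set set" where
  "face_poset M = {F. F face_of voronoi_cell M \<and> F \<noteq> {}}"

text \<open>Oriented submatroids (S, \<epsilon>): S \<subseteq> E, \<epsilon> : S \<rightarrow> {\<plusminus>1}; we represent \<epsilon> canonically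
  as a function 'e \<Rightarrow> int that is \<plusminus>1 on S and 0 outside S.\<close>
definition oriented_sub :: "'e set \<times> ('e \<Rightarrow> int) \<Rightarrow> bool" where
  "oriented_sub Se \<longleftrightarrow> (\<forall>f\<in>fst Se. snd Se f \<in> {1, -1}) \<and> (\<forall>f. f \<notin> fst Se \<longrightarrow> snd Se f = 0)"

definition reorient :: "real^'e^'r \<Rightarrow> 'e set \<Rightarrow> ('e \<Rightarrow> int) \<Rightarrow> real^'e^'r" where
  "reorient M S \<epsilon> = (\<chi> r e. (if e \<in> S then of_int (\<epsilon> e) else 1) * M $ r $ e)"

definition coherent_acyclic :: "real^'e^'r \<Rightarrow> 'e set \<times> ('e \<Rightarrow> int) \<Rightarrow> bool" where
  "coherent_acyclic M Se \<longleftrightarrow> oriented_sub Se \<and>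
     (\<forall>e\<in>fst Se. \<exists>z :: real^'e. (\<forall>f. z $ f \<in> \<int> \<and> z $ f \<ge> 0) \<and> (\<forall>f. f \<notin> fst Se \<longrightarrow> z $ f = 0) \<and>
        axis e 1 + z \<in> row_space (reorient M (fst Se) (snd Se)) \<inter> integer_vectors)"

definition CAC :: "real^'e^'r \<Rightarrow> ('e set \<times> ('e \<Rightarrow> int)) set" where
  "CAC M = {Se. coherent_acyclic M Se}"

definition cac_le :: "'e set \<times> ('e \<Rightarrow> int) \<Rightarrow> 'e set \<times> ('e \<Rightarrow> int) \<Rightarrow> bool" where
  "cac_le Se Se' \<longleftrightarrow> fst Se' \<subseteq> fst Se \<and> (\<forall>f\<in>fst Se'. snd Se' f = snd Se f)"

definition poset_isomorphic :: "'a set \<Rightarrow> ('a \<Rightarrow> 'a \<Rightarrow> bool) \<Rightarrow> 'b set \<Rightarrow> ('b \<Rightarrow> 'b \<Rightarrow> bool) \<Rightarrow> bool" where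
  "poset_isomorphic A leA B leB \<longleftrightarrow>
     (\<exists>\<phi>. bij_betw \<phi> A B \<and> (\<forall>a\<in>A. \<forall>b\<in>A. leA a b \<longleftrightarrow> leB (\<phi> a) (\<phi> b)))"

end

theory Submission
  imports Defs "Jordan_Normal_Form.Determinant"
begin


lemma row_space_iff: "x \<in> row_space M \<longleftrightarrow> (\<exists>l. \<forall>e. x$e = l \<bullet> column e M)"
  unfolding row_space_def inner_vec_def column_def by (simp add: mult.commute)

lemma orth_span: "a \<in> span S \<Longrightarrow> (\<And>y. y \<in> S \<Longrightarrow> x \<bullet> y = 0) \<Longrightarrow> x \<bullet> a = (0::real)"
  for x :: "'a::euclidean_space"
  using orthogonal_to_span[of a S x] unfolding real_inner_class.orthogonal_def by blast

lemma orth_decomp: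
  fixes x :: "'a::euclidean_space"
  obtains y z where "y \<in> span S" "\<And>w. w \<in> span S \<Longrightarrow> z \<bullet> w = 0" "x = y + z"
  using orthogonal_subspace_decomp_exists[of S x] unfolding real_inner_class.orthogonal_def by blast

lemma subdet_det: "subdet M k f g = Determinant.det (Matrix.mat k k (\<lambda>(i,j). M $ f i $ g j))"
  unfolding subdet_def Determinant.det_def by (simp add: atLeast0LessThan)

lemma TU_elem:
  fixes M :: "real^'e^'r" and c :: "real^'e"
  assumes TU: "totally_unimodular M" and cV: "c \<in> row_space M"
    and elem: "\<And>v. v \<in> row_space M \<Longrightarrow> v \<noteq> 0 \<Longrightarrow> {h. v$h \<noteq> 0} \<subseteq> {h. c$h \<noteq> 0} \<Longrightarrow> {h. v$h \<noteq> 0} = {h. c$h \<noteq> 0}"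
    and ce: "c$e = 1"
  shows "c$f \<in> {-1,0,1}"
proof (cases "c$f = 0 \<or> f = e")
  case True then show ?thesis using ce by auto
next
  case False
  hence cf: "c$f \<noteq> 0" and fe: "f \<noteq> e" by auto
  obtain l where l: "\<And>h. c$h = l \<bullet> column h M" using cV row_space_iff by blast
  define col where "col = (\<lambda>h. column h M)"
  define Z where "Z = {h. c$h = 0}"
  obtain Bv where Bv: "Bv \<subseteq> col ` Z" "independent Bv" "col ` Z \<subseteq> span Bv"
    using maximal_independent_subset[of "col ` Z"] by metis
  obtain B where B: "B \<subseteq> Z" "inj_on col B" "Bv = col ` B" using Bv(1) subset_image_inj by metis
  have lZ: "l \<bullet> y = 0" if "y \<in> span (col ` Z)" for y
    by (rule orth_span[OF that]) (auto simp: Z_def l col_def)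
  have eZ: "e \<notin> Z" using ce Z_def by auto
  have sBv: "span Bv \<subseteq> span (col ` Z)" using Bv(1) span_mono by blast
  have ecol: "col e \<notin> span Bv"
  proof
    assume "col e \<in> span Bv"
    hence "col e \<in> span (col ` Z)" using sBv by blast
    then have "l \<bullet> (col e) = 0" by (rule lZ)
    thus False using ce l unfolding col_def by simp
  qed
  define G where "G = insert e B"
  have eB: "e \<notin> B" using B eZ by auto
  have colG: "col ` G = insert (col e) Bv" using B G_def by auto
  have indG: "independent (col ` G)" using ecol Bv(2) colG
    by (simp add: independent_insert)
  have injG: "inj_on col G" using B(2) ecol eB B(3) unfolding G_def
    by (auto simp: span_base)
  have finG: "finite G" by simp
  have spanZ: "span (col ` Z) \<subseteq> span (col ` G)"
  proof -
    have "col ` Z \<subseteq> span (col ` G)" using Bv(3) colG span_mono[of Bv "col ` G"] by auto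
    thus ?thesis by (simp add: span_minimal)
  qed
  have fG: "col f \<in> span (col ` G)"
  proof (rule ccontr)
    assume nf: "col f \<notin> span (col ` G)"
    obtain y z where yz: "y \<in> span (col`G)" "\<And>w. w \<in> span (col`G) \<Longrightarrow> z \<bullet> w = 0" "col f = y + z"
      using orth_decomp by metis
    define v where "v = (\<chi> h. z \<bullet> col h)"
    have vV: "v \<in> row_space M" unfolding row_space_iff v_def col_def by auto
    have vZ: "v$h = 0" if "h \<in> Z \<union> G" for h
    proof -
      have "col h \<in> span (col ` G)"
        using that spanZ span_base[of "col h" "col ` Z"] span_base[of "col h" "col ` G"] by auto
      thus ?thesis using yz(2) unfolding v_def by simp
    qed
    have z0: "z \<noteq> 0" using nf yz by auto
    have "v$f = z \<bullet> y + z \<bullet> z" unfolding v_def using yz(3) by (simp add: inner_add_right)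
    also have "z \<bullet> y = 0" using yz(2)[OF yz(1)] by simp
    finally have vf: "v$f \<noteq> 0" using z0 by simp
    hence v0: "v \<noteq> 0" by auto
    have sub: "{h. v$h \<noteq> 0} \<subseteq> {h. c$h \<noteq> 0}" using vZ Z_def by auto
    have "{h. v$h \<noteq> 0} = {h. c$h \<noteq> 0}" using elem[OF vV v0 sub] .
    moreover have "e \<in> {h. c$h \<noteq> 0}" using ce by simp
    moreover have "e \<notin> {h. v$h \<noteq> 0}" using vZ G_def by auto
    ultimately show False by blast
  qed
  obtain u' where u': "col f = (\<Sum>v\<in>col ` G. u' v *\<^sub>R v)"
    using fG span_finite[of "col ` G"] by auto
  define u where "u = (\<lambda>h. u' (col h))"
  have u: "col f = (\<Sum>h\<in>G. u h *\<^sub>R col h)"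
    using u' sum.reindex[OF injG, of "\<lambda>v. u' v *\<^sub>R v"] unfolding u_def by simp
  have cfu: "c$f = u e"
  proof -
    have "c$f = l \<bullet> col f" using l col_def by simp
    also have "\<dots> = (\<Sum>h\<in>G. u h * (l \<bullet> col h))" unfolding u by (simp add: inner_sum_right)
    also have "\<dots> = u e * (l \<bullet> col e) + (\<Sum>h\<in>B. u h * (l \<bullet> col h))"
      unfolding G_def using eB by (simp add: sum.insert)
    also have "(\<Sum>h\<in>B. u h * (l \<bullet> col h)) = 0"
      using B(1) l col_def Z_def by (auto intro!: sum.neutral)
    finally show ?thesis using ce l col_def by simp
  qed
  define N :: "real^'e^'r" where "N = (\<chi> \<rho> h. if h \<in> G then M$\<rho>$h else 0)"
  have colN: "column h N = (if h \<in> G then col h else 0)" for h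
    by (auto simp: column_def col_def N_def Finite_Cartesian_Product.vec_eq_iff)
  have "Finite_Cartesian_Product.columns N \<subseteq> insert 0 (col ` G)"
  proof
    fix w assume "w \<in> Finite_Cartesian_Product.columns N"
    then obtain h where "w = column h N" unfolding Finite_Cartesian_Product.columns_def by blast
    thus "w \<in> insert 0 (col ` G)" using colN[of h] by (auto split: if_splits)
  qed
  moreover have "col ` G \<subseteq> Finite_Cartesian_Product.columns N"
  proof
    fix w assume "w \<in> col ` G"
    then obtain h where "h \<in> G" "w = col h" by blast
    thus "w \<in> Finite_Cartesian_Product.columns N" using colN[of h]
      unfolding Finite_Cartesian_Product.columns_def by (metis (mono_tags, lifting) UNIV_I mem_Collect_eq)
  qed
  ultimately have "span (Finite_Cartesian_Product.columns N) = span (col ` G)"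
    by (metis span_insert_0 span_mono subset_antisym)
  hence "rank N = card G"
    by (metis column_rank_def dim_span dim_eq_card_independent indG card_image injG)
  hence dimr: "dim (Finite_Cartesian_Product.rows N) = card G" by (simp add: row_rank_def)
  obtain Bw where Bw: "Bw \<subseteq> Finite_Cartesian_Product.rows N" "independent Bw" "Finite_Cartesian_Product.rows N \<subseteq> span Bw"
    using maximal_independent_subset[of "Finite_Cartesian_Product.rows N"] by metis
  have cardBw: "card Bw = card G" using basis_card_eq_dim[OF Bw(1) Bw(3) Bw(2)] dimr by simp
  have "Bw \<subseteq> (\<lambda>\<rho>. Finite_Cartesian_Product.row \<rho> N) ` UNIV" using Bw(1) unfolding Finite_Cartesian_Product.rows_def by auto
  then obtain Rho where Rho: "inj_on (\<lambda>\<rho>. Finite_Cartesian_Product.row \<rho> N) Rho" "Bw = (\<lambda>\<rho>. Finite_Cartesian_Product.row \<rho> N) ` Rho"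
    using subset_image_inj by metis
  define k where "k = card G"
  have cardRho: "card Rho = k" using cardBw Rho card_image k_def by metis
  obtain rr where rr: "bij_betw rr {0..<k} Rho" using ex_bij_betw_nat_finite[of Rho] cardRho by auto
  obtain gg where gg: "bij_betw gg {0..<k} G" using ex_bij_betw_nat_finite[of G] k_def by auto
  have "e \<in> gg ` {0..<k}" using gg G_def by (simp add: bij_betw_def)
  then obtain i0 where i0: "i0 < k" "gg i0 = e" by auto
  define A where "A = Matrix.mat k k (\<lambda>(i,j). M $ rr i $ gg j)"
  have Acar: "A \<in> carrier_mat k k" unfolding A_def by simp
  have dA: "Determinant.det A \<in> {-1,0,1}" using TU unfolding totally_unimodular_def A_def subdet_det
    by blast
  have dA0: "Determinant.det A \<noteq> 0"
  proof
    assume "Determinant.det A = 0"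
    hence "Determinant.det (transpose_mat A) = 0" using Acar by (simp add: det_transpose)
    then obtain v where v: "v \<in> carrier_vec k" "v \<noteq> 0\<^sub>v k" "transpose_mat A *\<^sub>v v = 0\<^sub>v k"
      using det_0_iff_vec_prod_zero[of "transpose_mat A" k] Acar by auto
    have vj: "(\<Sum>i<k. v $ i * M $ rr i $ gg j) = 0" if "j < k" for j
    proof -
      have "(transpose_mat A *\<^sub>v v) $ j = 0" using v(3) that by simp
      thus ?thesis using that v(1) unfolding A_def
        by (simp add: scalar_prod_def atLeast0LessThan mult.commute)
    qed
    define phi where "phi = (\<lambda>i. Finite_Cartesian_Product.row (rr i) N)"
    have rrim: "rr ` {0..<k} = Rho" and rrinj: "inj_on rr {0..<k}" using rr by (auto simp: bij_betw_def)
    have "inj_on ((\<lambda>\<rho>. Finite_Cartesian_Product.row \<rho> N) \<circ> rr) {0..<k}"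
      by (rule comp_inj_on[OF rrinj]) (simp add: rrim Rho(1))
    hence injphi: "inj_on phi {0..<k}" by (simp add: o_def phi_def)
    have "phi ` {0..<k} = (\<lambda>\<rho>. Finite_Cartesian_Product.row \<rho> N) ` (rr ` {0..<k})"
      unfolding phi_def by (simp only: image_image)
    hence phiim: "phi ` {0..<k} = Bw" using rrim Rho(2) by simp
    define cc where "cc = (\<lambda>w. v $ (inv_into {0..<k} phi w))"
    have "(\<Sum>w\<in>Bw. cc w *\<^sub>R w) = (\<Sum>i\<in>{0..<k}. cc (phi i) *\<^sub>R phi i)"
      using sum.reindex[OF injphi, of "\<lambda>w. cc w *\<^sub>R w"] phiim by simp
    also have "\<dots> = (\<Sum>i\<in>{0..<k}. v $ i *\<^sub>R phi i)"
      using injphi unfolding cc_def by (auto intro!: sum.cong)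
    also have "\<dots> = 0"
    proof (subst Finite_Cartesian_Product.vec_eq_iff, rule allI)
      fix h
      show "(\<Sum>i\<in>{0..<k}. v $ i *\<^sub>R phi i) $ h = 0 $ h"
      proof (cases "h \<in> G")
        case True
        have "h \<in> gg ` {0..<k}" using gg True by (simp add: bij_betw_def)
        then obtain j where j: "j < k" "gg j = h" by auto
        show ?thesis using vj[OF j(1)] j True unfolding phi_def
          by (simp add: N_def Finite_Cartesian_Product.row_def atLeast0LessThan)
      next
        case False
        thus ?thesis unfolding phi_def by (simp add: N_def Finite_Cartesian_Product.row_def)
      qed
    qed
    finally have "(\<Sum>w\<in>Bw. cc w *\<^sub>R w) = 0" .
    hence "\<forall>w\<in>Bw. cc w = 0" using Bw(2) independent_explicit by blast
    hence "v $ i = 0" if "i < k" for i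
    proof -
      have "cc (phi i) = 0" using \<open>\<forall>w\<in>Bw. cc w = 0\<close> phiim that by auto
      moreover have "cc (phi i) = v $ i" unfolding cc_def using injphi that by (simp add: inv_into_f_f)
      ultimately show ?thesis by simp
    qed
    hence "v = 0\<^sub>v k" using v(1) by (auto simp: Matrix.vec_eq_iff)
    thus False using v(2) by simp
  qed
  define x where "x = Matrix.vec k (\<lambda>j. u (gg j))"
  have xcar: "x \<in> carrier_vec k" unfolding x_def by simp
  have Ax: "A *\<^sub>v x = Matrix.vec k (\<lambda>i. M $ rr i $ f)"
  proof (rule eq_vecI)
    fix i assume i: "i < dim_vec (Matrix.vec k (\<lambda>i. M $ rr i $ f))"
    hence ik: "i < k" by simp
    have "(A *\<^sub>v x) $ i = (\<Sum>j\<in>{0..<k}. M $ rr i $ gg j * u (gg j))"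
      using ik unfolding A_def x_def by (simp add: scalar_prod_def)
    also have "\<dots> = (\<Sum>h\<in>G. M $ rr i $ h * u h)"
      using sum.reindex[of gg "{0..<k}" "\<lambda>h. M $ rr i $ h * u h"] gg
      by (simp add: bij_betw_def)
    also have "\<dots> = (\<Sum>h\<in>G. u h *\<^sub>R col h) $ rr i"
      by (simp add: col_def column_def mult.commute)
    also have "\<dots> = M $ rr i $ f" unfolding u[symmetric] by (simp add: col_def column_def)
    finally show "(A *\<^sub>v x) $ i = Matrix.vec k (\<lambda>i. M $ rr i $ f) $ i" using ik by simp
  qed (simp add: A_def)
  have cr: "Determinant.det (replace_col A (A *\<^sub>v x) i0) = x $ i0 * Determinant.det A"
    by (rule cramer_lemma_mat[OF Acar xcar i0(1)])
  have "replace_col A (A *\<^sub>v x) i0 = Matrix.mat k k (\<lambda>(i,j). M $ rr i $ (gg(i0 := f)) j)"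
    unfolding Ax unfolding replace_col_def A_def by (rule eq_matI) auto
  hence "Determinant.det (replace_col A (A *\<^sub>v x) i0) \<in> {-1,0,1}"
    using TU unfolding totally_unimodular_def subdet_det by metis
  hence "u e * Determinant.det A \<in> {-1,0,1}" using cr i0 xcar unfolding x_def by simp
  thus ?thesis using dA dA0 cfu by auto
qed



definition spt :: "real^'e \<Rightarrow> 'e set" where "spt w = {f. w$f \<noteq> 0}"
definition conf :: "real^'e \<Rightarrow> real^'e \<Rightarrow> bool" where
  "conf v w \<longleftrightarrow> (\<forall>f. v$f = 0 \<or> 0 < v$f * w$f)"
definition l1 :: "real^'e \<Rightarrow> real" where "l1 w = (\<Sum>f\<in>UNIV. \<bar>w$f\<bar>)"
definition elem :: "(real^'e) set \<Rightarrow> real^'e \<Rightarrow> bool" where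
  "elem V c \<longleftrightarrow> c \<in> V \<and> c \<noteq> 0 \<and> (\<forall>v\<in>V. v \<noteq> 0 \<longrightarrow> spt v \<subseteq> spt c \<longrightarrow> spt v = spt c)"

lemma conf_refl: "conf y y" unfolding conf_def by auto

lemma conf_trans: "conf a b \<Longrightarrow> conf b c \<Longrightarrow> conf a c"
  unfolding conf_def
proof (intro allI)
  fix f assume ab: "\<forall>f. a$f = 0 \<or> 0 < a$f * b$f" and bc: "\<forall>f. b$f = 0 \<or> 0 < b$f * c$f"
  show "a$f = 0 \<or> 0 < a$f * c$f"
  proof (cases "a$f = 0")
    case False
    hence 1: "0 < a$f * b$f" using ab by auto
    hence "b$f \<noteq> 0" by auto
    hence 2: "0 < b$f * c$f" using bc by auto
    from 1 2 show ?thesis by (auto simp: zero_less_mult_iff)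
  qed simp
qed

lemma conf_spt: "conf a b \<Longrightarrow> spt a \<subseteq> spt b" unfolding conf_def spt_def by force

lemma subspace_row: "subspace (row_space M)"
proof -
  have 0: "0 \<in> row_space M" unfolding row_space_iff by (rule exI[of _ 0]) simp
  have a: "x + y \<in> row_space M" if xy: "x \<in> row_space M" "y \<in> row_space M" for x y
  proof -
    obtain p q where "\<forall>e. x $ e = p \<bullet> column e M" "\<forall>e. y $ e = q \<bullet> column e M"
      using xy[unfolded row_space_iff] by blast
    thus ?thesis unfolding row_space_iff by (auto intro!: exI[of _ "p + q"] simp: inner_add_left)
  qed
  have s: "c *\<^sub>R x \<in> row_space M" if xx: "x \<in> row_space M" for x c
  proof -
    obtain p where "\<forall>e. x $ e = p \<bullet> column e M"
      using xx[unfolded row_space_iff] by blast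
    thus ?thesis unfolding row_space_iff by (auto intro!: exI[of _ "c *\<^sub>R p"])
  qed
  show ?thesis unfolding subspace_def using 0 a s by blast
qed

lemma reduce:
  fixes y v :: "real^'e"
  assumes pos: "\<exists>g. 0 < v$g * y$g" and sub: "\<forall>g. y$g = 0 \<longrightarrow> v$g = 0"
  shows "\<exists>t>0. conf (y - t *\<^sub>R v) y \<and> (\<exists>g. y$g \<noteq> 0 \<and> (y - t *\<^sub>R v)$g = 0) \<and>
     (\<forall>g. v$g * y$g \<le> 0 \<longrightarrow> y$g \<noteq> 0 \<longrightarrow> (y - t *\<^sub>R v)$g \<noteq> 0)"
proof -
  define R where "R = (\<lambda>g. y$g / v$g) ` {g. 0 < v$g * y$g}"
  have finR: "finite R" "R \<noteq> {}" using pos unfolding R_def by auto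
  define t where "t = Min R"
  obtain g0 where g0: "0 < v$g0 * y$g0" "t = y$g0 / v$g0"
    using Min_in[OF finR] unfolding t_def R_def by auto
  have tle: "t \<le> y$g / v$g" if "0 < v$g * y$g" for g
    unfolding t_def R_def using finR that by (auto intro!: Min_le)
  have ratpos: "0 < y$g / v$g" if "0 < v$g * y$g" for g
    using that by (auto simp: zero_less_mult_iff zero_less_divide_iff)
  have tpos: "0 < t" using ratpos[OF g0(1)] g0(2) by simp
  have key: "(y - t *\<^sub>R v)$g * y$g = v$g * y$g * (y$g / v$g - t)" if "v$g \<noteq> 0" for g
  proof -
    have "v$g * (y$g / v$g) = y$g" using that by simp
    hence "v$g * y$g * (y$g / v$g - t) = y$g * y$g - t * v$g * y$g"
      by (metis mult.commute mult.left_commute right_diff_distrib)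
    thus ?thesis by (simp add: algebra_simps)
  qed
  have "conf (y - t *\<^sub>R v) y"
    unfolding conf_def
  proof
    fix g
    show "(y - t *\<^sub>R v)$g = 0 \<or> 0 < (y - t *\<^sub>R v)$g * y$g"
    proof (cases "0 < v$g * y$g")
      case True
      have "0 \<le> v$g * y$g * (y$g / v$g - t)" using True tle[OF True] by simp
      moreover have "v$g \<noteq> 0" using True by auto
      ultimately have "0 \<le> (y - t *\<^sub>R v)$g * y$g" using key[of g] by metis
      moreover have "y$g \<noteq> 0" using True by auto
      ultimately show ?thesis by (metis less_eq_real_def mult_eq_0_iff)
    next
      case False
      show ?thesis
      proof (cases "y$g = 0")
        case True thus ?thesis using sub by simp
      next
        case yn: False
        have "(y - t *\<^sub>R v)$g * y$g = y$g * y$g - t * (v$g * y$g)" by (simp add: algebra_simps)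
        moreover have "0 \<le> - t * (v$g * y$g)" using False tpos mult_nonneg_nonpos[of t "v$g*y$g"] less_imp_le[OF tpos] by simp
        moreover have "0 < y$g * y$g" using yn not_real_square_gt_zero by blast
        ultimately show ?thesis by linarith
      qed
    qed
  qed
  moreover have "y$g0 \<noteq> 0 \<and> (y - t *\<^sub>R v)$g0 = 0" using g0 by auto
  moreover have "(y - t *\<^sub>R v)$g \<noteq> 0" if "v$g * y$g \<le> 0" "y$g \<noteq> 0" for g
  proof
    assume h: "(y - t *\<^sub>R v)$g = 0"
    have "(y - t *\<^sub>R v)$g * y$g = y$g * y$g - t * (v$g * y$g)" by (simp add: algebra_simps)
    moreover have "0 \<le> - t * (v$g * y$g)" using that tpos mult_nonneg_nonpos[of t "v$g*y$g"] less_imp_le[OF tpos] by simp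
    moreover have "0 < y$g * y$g" using that not_real_square_gt_zero by blast
    ultimately show False using h by simp
  qed
  ultimately show ?thesis using tpos by blast
qed

lemma step_down:
  fixes y v :: "real^'e"
  assumes V: "subspace V" and yV: "y \<in> V" and vV: "v \<in> V" and v0: "v \<noteq> 0"
    and sv: "spt v \<subseteq> spt y" and sne: "spt v \<noteq> spt y" and ye: "y$e \<noteq> 0"
  shows "\<exists>y'. y' \<in> V \<and> conf y' y \<and> y'$e \<noteq> 0 \<and> spt y' \<subset> spt y"
proof -
  have sub: "\<forall>g. y$g = 0 \<longrightarrow> v$g = 0" using sv unfolding spt_def by auto
  have red: "\<exists>y'. y' \<in> V \<and> conf y' y \<and> y'$e \<noteq> 0 \<and> spt y' \<subset> spt y"
    if w: "w = v \<or> w = -v" and pos: "\<exists>g. 0 < w$g * y$g" and we: "w$e * y$e \<le> 0" for w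
  proof -
    have subw: "\<forall>g. y$g = 0 \<longrightarrow> w$g = 0" using sub w by auto
    obtain t where t: "t > 0" "conf (y - t *\<^sub>R w) y" "\<exists>g. y$g \<noteq> 0 \<and> (y - t *\<^sub>R w)$g = 0"
      "\<forall>g. w$g * y$g \<le> 0 \<longrightarrow> y$g \<noteq> 0 \<longrightarrow> (y - t *\<^sub>R w)$g \<noteq> 0"
      using reduce[OF pos subw] by blast
    have wV: "w \<in> V" using w vV V by (auto simp: subspace_neg)
    have "y - t *\<^sub>R w \<in> V" using V yV wV by (simp add: subspace_diff subspace_scale)
    moreover have "spt (y - t *\<^sub>R w) \<subset> spt y" using conf_spt[OF t(2)] t(3) unfolding spt_def by blast
    ultimately show ?thesis using t(2) t(4) we ye by blast
  qed
  show ?thesis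
  proof (cases "v$e = 0")
    case True
    obtain g where g: "v$g \<noteq> 0" using v0 by (metis Finite_Cartesian_Product.vec_eq_iff zero_index)
    have yg: "y$g \<noteq> 0" using g sub by auto
    show ?thesis
    proof (cases "0 < v$g * y$g")
      case True2: True
      show ?thesis by (rule red[of v]) (use True2 True in auto)
    next
      case False
      hence "0 < (-v)$g * y$g" using g yg by (auto simp: zero_less_mult_iff not_less le_less mult_less_0_iff)
      thus ?thesis by (intro red[of "-v"]) (use True in auto)
    qed
  next
    case False
    define w where "w = (if v$e * y$e < 0 then v else -v)"
    have w: "w = v \<or> w = -v" unfolding w_def by auto
    have we: "w$e * y$e < 0" using False ye unfolding w_def
      by (auto simp: mult_less_0_iff zero_less_mult_iff not_less le_less)
    show ?thesis
    proof (cases "\<exists>g. 0 < w$g * y$g")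
      case True
      thus ?thesis using red[OF w True] we by auto
    next
      case False
      have c: "conf (-w) y" unfolding conf_def
      proof
        fix g show "(-w)$g = 0 \<or> 0 < (-w)$g * y$g"
        proof (cases "w$g = 0")
          case False2: False
          hence "y$g \<noteq> 0" using sub w by auto
          hence "w$g * y$g \<noteq> 0" using False2 by simp
          hence "w$g * y$g < 0" using False by (meson not_less_iff_gr_or_eq)
          thus ?thesis by simp
        qed simp
      qed
      have "-w \<in> V" using w vV V by (auto simp: subspace_neg)
      moreover have "spt (-w) = spt v" using w unfolding spt_def by auto
      moreover have "(-w)$e \<noteq> 0" using we by auto
      ultimately show ?thesis using c sv sne by (intro exI[of _ "-w"]) auto
    qed
  qed
qed

lemma conf_elem:
  fixes y :: "real^'e"
  assumes V: "subspace V" and yV: "y \<in> V" and ye: "y$e \<noteq> 0"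
  shows "\<exists>c. elem V c \<and> conf c y \<and> c$e \<noteq> 0"
  using yV ye
proof (induction "card (spt y)" arbitrary: y rule: less_induct)
  case less
  show ?case
  proof (cases "elem V y")
    case True thus ?thesis using less.prems conf_refl by blast
  next
    case False
    have "y \<noteq> 0" using less.prems by auto
    then obtain v where v: "v \<in> V" "v \<noteq> 0" "spt v \<subseteq> spt y" "spt v \<noteq> spt y"
      using False less.prems unfolding elem_def by blast
    obtain y' where y': "y' \<in> V" "conf y' y" "y'$e \<noteq> 0" "spt y' \<subset> spt y"
      using step_down[OF V less.prems(1) v less.prems(2)] by blast
    have "card (spt y') < card (spt y)" using y'(4) by (simp add: psubset_card_mono)
    then obtain c where "elem V c" "conf c y'" "c$e \<noteq> 0" using less.hyps y'(1,3) by blast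
    thus ?thesis using y'(2) conf_trans by blast
  qed
qed

lemma unit_vec:
  fixes M :: "real^'e^'r" and y :: "real^'e"
  assumes TU: "totally_unimodular M" and yV: "y \<in> row_space M" and ye: "y$e \<noteq> 0"
  shows "\<exists>u\<in>row_space M. (\<forall>f. u$f \<in> {-1,0,1}) \<and> conf u y \<and> u$e = sgn (y$e)"
proof -
  obtain c where c: "elem (row_space M) c" "conf c y" "c$e \<noteq> 0"
    using conf_elem[OF subspace_row yV ye] by blast
  define c' where "c' = (1 / c$e) *\<^sub>R c"
  have c'V: "c' \<in> row_space M" using c(1) unfolding elem_def c'_def
    by (simp add: subspace_scale[OF subspace_row])
  have sptc': "spt c' = spt c" using c(3) unfolding spt_def c'_def by auto
  have c'e: "c'$e = 1" using c(3) unfolding c'_def by simp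
  have c'f: "c'$f \<in> {-1,0,1}" for f
  proof (rule TU_elem[OF TU c'V _ c'e])
    fix v assume "v \<in> row_space M" "v \<noteq> 0" "{h. v $ h \<noteq> 0} \<subseteq> {h. c' $ h \<noteq> 0}"
    thus "{h. v $ h \<noteq> 0} = {h. c' $ h \<noteq> 0}" using c(1) sptc' unfolding elem_def spt_def by auto
  qed
  have cey: "0 < c$e * y$e" using c(2,3) unfolding conf_def by auto
  define u where "u = sgn (y$e) *\<^sub>R c'"
  have sy: "sgn (y$e) = sgn (c$e)" using cey ye c(3)
    by (auto simp: sgn_if zero_less_mult_iff)
  have "u \<in> row_space M" unfolding u_def using c'V by (simp add: subspace_scale[OF subspace_row])
  moreover have "u$f \<in> {-1,0,1}" for f using c'f[of f] unfolding u_def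
    by (auto simp: sgn_if)
  moreover have "conf u y" unfolding conf_def
  proof
    fix f
    have "u$f * y$f = (c$f * y$f) * (sgn (c$e) / c$e)" unfolding u_def c'_def sy by simp
    moreover have "0 < sgn (c$e) / c$e" using c(3) by (auto simp: sgn_if)
    moreover have "c$f = 0 \<Longrightarrow> u$f = 0" by (simp add: u_def c'_def)
    ultimately show "u$f = 0 \<or> 0 < u$f * y$f" using c(2) unfolding conf_def
      by (metis mult_pos_pos)
  qed
  moreover have "u$e = sgn (y$e)" unfolding u_def using c'e by simp
  ultimately show ?thesis by blast
qed

lemma inner_vec_real: "(x::real^'e) \<bullet> y = (\<Sum>f\<in>UNIV. x$f * y$f)"
  by (simp add: inner_vec_def)

lemma l1_zero[simp]: "l1 0 = 0" by (simp add: l1_def)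

lemma l1_ineq:
  fixes M :: "real^'e^'r" and x :: "real^'e"
  assumes TU: "totally_unimodular M"
    and H: "\<And>u. u \<in> row_space M \<Longrightarrow> (\<forall>f. u$f \<in> {-1,0,1}) \<Longrightarrow> 2 * (x \<bullet> u) \<le> l1 u"
  shows "w \<in> row_space M \<Longrightarrow> 2 * (x \<bullet> w) \<le> l1 w"
proof (induction "card (spt w)" arbitrary: w rule: less_induct)
  case less
  show ?case
  proof (cases "w = 0")
    case True thus ?thesis by simp
  next
    case False
    then obtain e where e: "w$e \<noteq> 0" by (metis Finite_Cartesian_Product.vec_eq_iff zero_index)
    obtain u :: "real^'e" where u: "u \<in> row_space M" "\<forall>f. u$f \<in> {-1,0,1}" "conf u w" "u$e = sgn (w$e)"
      using unit_vec[OF TU less.prems e] by blast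
    define S where "S = {f. u$f \<noteq> 0}"
    have eS: "e \<in> S" using u(4) e unfolding S_def by (auto simp: sgn_if)
    define lam where "lam = Min ((\<lambda>f. \<bar>w$f\<bar>) ` S)"
    have finS: "finite ((\<lambda>f. \<bar>w$f\<bar>) ` S)" "(\<lambda>f. \<bar>w$f\<bar>) ` S \<noteq> {}" using eS by auto
    obtain f0 where f0: "f0 \<in> S" "lam = \<bar>w$f0\<bar>" using Min_in[OF finS] unfolding lam_def by auto
    have lamle: "lam \<le> \<bar>w$f\<bar>" if "f \<in> S" for f unfolding lam_def using finS that by (auto intro!: Min_le)
    have uw: "0 < u$f * w$f" if "f \<in> S" for f using u(3) that unfolding conf_def S_def by auto
    have lampos: "0 < lam" using uw[OF f0(1)] f0(2) by auto
    define w' where "w' = w - lam *\<^sub>R u"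
    have coord: "\<bar>w$f\<bar> = \<bar>w'$f\<bar> + lam * \<bar>u$f\<bar> \<and> (w'$f = 0 \<or> 0 < w'$f * w$f)" for f
    proof (cases "f \<in> S")
      case False
      hence "u$f = 0" unfolding S_def by auto
      thus ?thesis unfolding w'_def using not_real_square_gt_zero[of "w$f"] by auto
    next
      case True
      have le: "lam \<le> \<bar>w$f\<bar>" using lamle[OF True] .
      have pos: "0 < u$f * w$f" using uw[OF True] .
      from u(2) True consider "u$f = 1" | "u$f = -1" unfolding S_def by auto
      thus ?thesis
      proof cases
        case 1
        hence "w$f > 0" using pos by simp
        thus ?thesis using le 1 unfolding w'_def by (auto simp: zero_less_mult_iff)
      next
        case 2
        hence "w$f < 0" using pos by simp
        thus ?thesis using le 2 unfolding w'_def by (auto simp: zero_less_mult_iff mult_less_0_iff)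
      qed
    qed
    have w'0: "w'$f0 = 0"
    proof -
      have "u$f0 \<in> {-1,0,1}" "u$f0 \<noteq> 0" using u(2) f0(1) unfolding S_def by auto
      then consider "u$f0 = 1" | "u$f0 = -1" by auto
      thus ?thesis
      proof cases
        case 1 thus ?thesis using uw[OF f0(1)] f0(2) unfolding w'_def by simp
      next
        case 2 thus ?thesis using uw[OF f0(1)] f0(2) unfolding w'_def by simp
      qed
    qed
    have cw': "conf w' w" unfolding conf_def using coord by blast
    have "spt w' \<subset> spt w" using conf_spt[OF cw'] w'0 uw[OF f0(1)] unfolding spt_def by force
    hence card: "card (spt w') < card (spt w)" by (simp add: psubset_card_mono)
    have w'V: "w' \<in> row_space M" unfolding w'_def using less.prems u(1)
      by (simp add: subspace_diff[OF subspace_row] subspace_scale[OF subspace_row])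
    have IH: "2 * (x \<bullet> w') \<le> l1 w'" using less.hyps[OF card w'V] .
    have Hu: "2 * (x \<bullet> u) \<le> l1 u" using H[OF u(1) u(2)] .
    have l1eq: "l1 w = l1 w' + lam * l1 u"
      unfolding l1_def using coord by (simp add: sum.distrib sum_distrib_left)
    have ineq: "x \<bullet> w = x \<bullet> w' + lam * (x \<bullet> u)" unfolding w'_def by (simp add: inner_diff_right)
    have "lam * (2 * (x \<bullet> u)) \<le> lam * l1 u" using Hu lampos by (simp add: mult_left_mono)
    thus ?thesis using IH l1eq ineq by (simp add: algebra_simps)
  qed
qed

lemma int_abs_le_sq: "r \<in> \<int> \<Longrightarrow> \<bar>r\<bar> \<le> r * (r::real)"
proof -
  assume "r \<in> \<int>"
  then obtain n where n: "r = of_int n" by (auto elim: Ints_cases)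
  have "\<bar>n\<bar> \<le> n * n"
  proof (cases "n = 0")
    case False
    hence "1 \<le> \<bar>n\<bar>" by simp
    hence "\<bar>n\<bar> * 1 \<le> \<bar>n\<bar> * \<bar>n\<bar>" by (intro mult_left_mono) auto
    thus ?thesis by (simp add: abs_mult[symmetric])
  qed simp
  hence "real_of_int \<bar>n\<bar> \<le> real_of_int (n * n)" by linarith
  thus ?thesis using n by simp
qed

lemma vor_iff:
  fixes M :: "real^'e^'r"
  assumes TU: "totally_unimodular M"
  shows "x \<in> voronoi_cell M \<longleftrightarrow> x \<in> row_space M \<and> (\<forall>w\<in>row_space M. 2 * (x \<bullet> w) \<le> l1 w)"
proof
  assume x: "x \<in> voronoi_cell M"
  hence xV: "x \<in> row_space M" unfolding voronoi_cell_def by auto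
  have H: "2 * (x \<bullet> u) \<le> l1 u" if "u \<in> row_space M" "\<forall>f. u$f \<in> {-1,0,1}" for u :: "real^'e"
  proof -
    have "u$f \<in> \<int>" for f using that(2)[rule_format, of f] by (auto intro: Ints_minus)
    hence "u \<in> cut_lattice M" using that unfolding cut_lattice_def integer_vectors_def by auto
    hence "norm x \<le> norm (x - u)" using x unfolding voronoi_cell_def by auto
    hence "x \<bullet> x \<le> (x - u) \<bullet> (x - u)" by (simp add: norm_le)
    hence "2 * (x \<bullet> u) \<le> u \<bullet> u" by (simp add: inner_diff_left inner_diff_right inner_commute)
    moreover have "u \<bullet> u = l1 u" unfolding inner_vec_real l1_def
    proof (rule sum.cong)
      fix f have "u$f \<in> {-1,0,1}" using that(2) by blast
      thus "u$f * u$f = \<bar>u$f\<bar>" by auto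
    qed simp
    ultimately show ?thesis by simp
  qed
  show "x \<in> row_space M \<and> (\<forall>w\<in>row_space M. 2 * (x \<bullet> w) \<le> l1 w)"
    using xV l1_ineq[OF TU H] by blast
next
  assume x: "x \<in> row_space M \<and> (\<forall>w\<in>row_space M. 2 * (x \<bullet> w) \<le> l1 w)"
  have "norm x \<le> norm (x - \<mu>)" if mu: "\<mu> \<in> cut_lattice M" for \<mu>
  proof -
    have "2 * (x \<bullet> \<mu>) \<le> l1 \<mu>" using x mu unfolding cut_lattice_def by auto
    moreover have "l1 \<mu> \<le> \<mu> \<bullet> \<mu>" unfolding inner_vec_real l1_def
      using mu unfolding cut_lattice_def integer_vectors_def
      by (intro sum_mono) (auto intro: int_abs_le_sq)
    ultimately have "x \<bullet> x \<le> (x - \<mu>) \<bullet> (x - \<mu>)"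
      by (simp add: inner_diff_left inner_diff_right inner_commute)
    thus ?thesis by (simp add: norm_le)
  qed
  thus "x \<in> voronoi_cell M" using x unfolding voronoi_cell_def by auto
qed

definition Uset :: "real^'e^'r \<Rightarrow> (real^'e) set" where
  "Uset M = {u \<in> row_space M. \<forall>f. u$f \<in> {-1,0,1}}"

lemma finite_vecs: "finite A \<Longrightarrow> finite {u::'a^'n. \<forall>f. u$f \<in> A}"
proof -
  assume A: "finite A"
  have "{u::'a^'n. \<forall>f. u$f \<in> A} \<subseteq> vec_lambda ` (PiE UNIV (\<lambda>_. A))"
  proof
    fix u :: "'a^'n" assume "u \<in> {u. \<forall>f. u$f \<in> A}"
    hence "vec_nth u \<in> PiE UNIV (\<lambda>_. A)" by auto
    moreover have "u = vec_lambda (vec_nth u)" by simp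
    ultimately show "u \<in> vec_lambda ` (PiE UNIV (\<lambda>_. A))" by blast
  qed
  moreover have "finite (PiE (UNIV::'n set) (\<lambda>_. A))" using A by (simp add: finite_PiE)
  ultimately show ?thesis by (meson finite_imageI finite_subset)
qed

lemma vor_poly:
  fixes M :: "real^'e^'r"
  assumes TU: "totally_unimodular M"
  shows "voronoi_cell M = row_space M \<inter> \<Inter>((\<lambda>u. {x. u \<bullet> x \<le> l1 u / 2}) ` Uset M)"
    and "polyhedron (voronoi_cell M)"
proof -
  show eq: "voronoi_cell M = row_space M \<inter> \<Inter>((\<lambda>u. {x. u \<bullet> x \<le> l1 u / 2}) ` Uset M)"
  proof (rule Set.set_eqI)
    fix x
    show "x \<in> voronoi_cell M \<longleftrightarrow> x \<in> row_space M \<inter> \<Inter>((\<lambda>u. {x. u \<bullet> x \<le> l1 u / 2}) ` Uset M)"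
    proof
      assume "x \<in> voronoi_cell M"
      thus "x \<in> row_space M \<inter> \<Inter>((\<lambda>u. {x. u \<bullet> x \<le> l1 u / 2}) ` Uset M)"
        unfolding vor_iff[OF TU] Uset_def by (auto simp: inner_commute)
    next
      assume x: "x \<in> row_space M \<inter> \<Inter>((\<lambda>u. {x. u \<bullet> x \<le> l1 u / 2}) ` Uset M)"
      have "2 * (x \<bullet> u) \<le> l1 u" if "u \<in> row_space M" "\<forall>f. u$f \<in> {-1,0,1}" for u :: "real^'e"
        using x that unfolding Uset_def by (auto simp: inner_commute)
      thus "x \<in> voronoi_cell M" unfolding vor_iff[OF TU] using x l1_ineq[OF TU] by blast
    qed
  qed
  have fin: "finite (Uset M)" unfolding Uset_def
    by (rule finite_subset[OF _ finite_vecs[of "{-1,0,1::real}"]]) auto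
  have "polyhedron (row_space M)"
    by (rule affine_imp_polyhedron[OF subspace_imp_affine[OF subspace_row]])
  moreover have "polyhedron (\<Inter>((\<lambda>u. {x. u \<bullet> x \<le> l1 u / 2}) ` Uset M))"
  proof (rule polyhedron_Inter)
    show "finite ((\<lambda>u. {x. u \<bullet> x \<le> l1 u / 2}) ` Uset M)" using fin by simp
  next
    fix S assume "S \<in> (\<lambda>u. {x. u \<bullet> x \<le> l1 u / 2}) ` Uset M"
    then obtain u where "S = {x. u \<bullet> x \<le> l1 u / 2}" by blast
    thus "polyhedron S" using polyhedron_halfspace_le by blast
  qed
  ultimately show "polyhedron (voronoi_cell M)" unfolding eq by (rule polyhedron_Int)
qed

lemma sgn_mult_le_abs: "(v::real) * sgn w \<le> \<bar>v\<bar>"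
  by (auto simp: sgn_if)

lemma mult_sgn_self: "(w::real) * sgn w = \<bar>w\<bar>"
  by (auto simp: sgn_if)

lemma row_span_eq:
  fixes M :: "real^'e^'r"
  shows "span (row_space M) = row_space M"
  by (rule span_eq_iff[THEN iffD2, OF subspace_row])

lemma xstar:
  fixes M :: "real^'e^'r"
  assumes TU: "totally_unimodular M" and wV: "w \<in> row_space M"
  shows "\<exists>p\<in>voronoi_cell M. (\<forall>v\<in>row_space M. 2 * (v \<bullet> p) = (\<Sum>f\<in>UNIV. v$f * sgn (w$f)))
            \<and> 2 * (w \<bullet> p) = l1 w"
proof -
  define y :: "real^'e" where "y = (\<chi> f. sgn (w$f) / 2)"
  obtain p z where pz: "p \<in> span (row_space M)" "\<And>u. u \<in> span (row_space M) \<Longrightarrow> z \<bullet> u = 0" "y = p + z"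
    using orth_decomp by metis
  have pV: "p \<in> row_space M" using pz(1)[unfolded row_span_eq] .
  have vp: "2 * (v \<bullet> p) = (\<Sum>f\<in>UNIV. v$f * sgn (w$f))" if "v \<in> row_space M" for v
  proof -
    have "z \<bullet> v = 0" using pz(2)[unfolded row_span_eq] that by auto
    hence "v \<bullet> p = v \<bullet> y" using pz(3) by (simp add: inner_add_right inner_commute)
    also have "\<dots> = (\<Sum>f\<in>UNIV. v$f * sgn (w$f)) / 2" unfolding inner_vec_real y_def
      by (simp add: sum_divide_distrib)
    finally show ?thesis by simp
  qed
  have "p \<in> voronoi_cell M" unfolding vor_iff[OF TU]
  proof (intro conjI ballI pV)
    fix v assume v: "v \<in> row_space M"
    have "2 * (p \<bullet> v) = (\<Sum>f\<in>UNIV. v$f * sgn (w$f))" using vp[OF v] by (simp add: inner_commute)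
    also have "\<dots> \<le> l1 v" unfolding l1_def by (intro sum_mono sgn_mult_le_abs)
    finally show "2 * (p \<bullet> v) \<le> l1 v" .
  qed
  moreover have "2 * (w \<bullet> p) = l1 w" using vp[OF wV] unfolding l1_def by (simp add: mult_sgn_self)
  ultimately show ?thesis using vp by blast
qed

definition Fw :: "real^'e^'r \<Rightarrow> real^'e \<Rightarrow> (real^'e) set" where
  "Fw M w = voronoi_cell M \<inter> {x. w \<bullet> x = l1 w / 2}"

lemma Fw_face:
  fixes M :: "real^'e^'r"
  assumes TU: "totally_unimodular M" and wV: "w \<in> row_space M"
  shows "Fw M w face_of voronoi_cell M" "Fw M w \<noteq> {}"
proof -
  have cv: "convex (voronoi_cell M)" using vor_poly(2)[OF TU] polyhedron_imp_convex by blast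
  have "w \<bullet> x \<le> l1 w / 2" if "x \<in> voronoi_cell M" for x
    using that wV unfolding vor_iff[OF TU] by (auto simp: inner_commute)
  thus "Fw M w face_of voronoi_cell M" unfolding Fw_def
    by (rule face_of_Int_supporting_hyperplane_le[OF cv])
  obtain p where "p \<in> voronoi_cell M" "2 * (w \<bullet> p) = l1 w" using xstar[OF TU wV] by blast
  thus "Fw M w \<noteq> {}" unfolding Fw_def by auto
qed

lemma face_Fw:
  fixes M :: "real^'e^'r"
  assumes TU: "totally_unimodular M" and F: "F face_of voronoi_cell M" and Fne: "F \<noteq> {}"
  shows "\<exists>w\<in>row_space M. F = Fw M w"
proof -
  have "F exposed_face_of voronoi_cell M"
    using exposed_face_of_polyhedron[OF vor_poly(2)[OF TU]] F by blast
  then obtain a b where ab: "voronoi_cell M \<subseteq> {x. a \<bullet> x \<le> b}" "F = voronoi_cell M \<inter> {x. a \<bullet> x = b}"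
    unfolding exposed_face_of_def by blast
  obtain p q where pq: "p \<in> span (row_space M)" "\<And>u. u \<in> span (row_space M) \<Longrightarrow> q \<bullet> u = 0" "a = p + q"
    using orth_decomp by metis
  have pV: "p \<in> row_space M" using pq(1)[unfolded row_span_eq] .
  have ax: "a \<bullet> x = p \<bullet> x" if "x \<in> voronoi_cell M" for x
  proof -
    have "x \<in> row_space M" using that unfolding voronoi_cell_def by auto
    hence "q \<bullet> x = 0" using pq(2)[unfolded row_span_eq] by auto
    thus ?thesis using pq(3) by (simp add: inner_add_left)
  qed
  obtain x1 where x1: "x1 \<in> F" using Fne by auto
  have x1V: "x1 \<in> voronoi_cell M" and bx1: "a \<bullet> x1 = b" using x1 ab(2) by auto
  have "2 * (x1 \<bullet> p) \<le> l1 p" using x1V pV unfolding vor_iff[OF TU] by auto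
  hence b1: "b \<le> l1 p / 2" using bx1 ax[OF x1V] by (simp add: inner_commute)
  obtain xs where xs: "xs \<in> voronoi_cell M" "2 * (p \<bullet> xs) = l1 p" using xstar[OF TU pV] by blast
  have "a \<bullet> xs \<le> b" using xs(1) ab(1) by auto
  hence b2: "l1 p / 2 \<le> b" using ax[OF xs(1)] xs(2) by simp
  have "F = Fw M p" unfolding ab(2) Fw_def using ax b1 b2 by auto
  thus ?thesis using pV by blast
qed

lemma Fw_mono:
  fixes M :: "real^'e^'r"
  assumes TU: "totally_unimodular M" and wV: "w \<in> row_space M" and w'V: "w' \<in> row_space M"
  shows "Fw M w \<subseteq> Fw M w' \<longleftrightarrow> conf w' w"
proof
  assume sub: "Fw M w \<subseteq> Fw M w'"
  obtain p where p: "p \<in> voronoi_cell M" "\<forall>v\<in>row_space M. 2 * (v \<bullet> p) = (\<Sum>f\<in>UNIV. v$f * sgn (w$f))"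
    "2 * (w \<bullet> p) = l1 w" using xstar[OF TU wV] by blast
  have "p \<in> Fw M w" unfolding Fw_def using p by auto
  hence "p \<in> Fw M w'" using sub by auto
  hence "2 * (w' \<bullet> p) = l1 w'" unfolding Fw_def by auto
  hence "(\<Sum>f\<in>UNIV. w'$f * sgn (w$f)) = (\<Sum>f\<in>UNIV. \<bar>w'$f\<bar>)" using p(2) w'V unfolding l1_def by auto
  hence "(\<Sum>f\<in>UNIV. \<bar>w'$f\<bar> - w'$f * sgn (w$f)) = 0" by (simp add: sum_subtractf)
  hence z: "\<forall>f\<in>UNIV. \<bar>w'$f\<bar> - w'$f * sgn (w$f) = 0"
    by (subst sum_nonneg_eq_0_iff[symmetric]) (auto simp: sgn_mult_le_abs)
  show "conf w' w" unfolding conf_def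
  proof
    fix f
    have e: "\<bar>w'$f\<bar> = w'$f * sgn (w$f)" using z by auto
    show "w'$f = 0 \<or> 0 < w'$f * w$f"
      using e by (cases "w$f > 0"; cases "w$f < 0"; cases "w'$f > 0"; cases "w'$f < 0") (auto simp: sgn_if zero_less_mult_iff)
  qed
next
  assume c: "conf w' w"
  show "Fw M w \<subseteq> Fw M w'"
  proof (cases "w' = 0")
    case True thus ?thesis unfolding Fw_def by auto
  next
    case False
    define S where "S = {f. w'$f \<noteq> 0}"
    obtain f1 where "w'$f1 \<noteq> 0" using False by (metis Finite_Cartesian_Product.vec_eq_iff zero_index)
    hence Sne: "S \<noteq> {}" unfolding S_def by auto
    have cw: "0 < w'$f * w$f" if "f \<in> S" for f using c that unfolding conf_def S_def by auto
    define s where "s = Min ((\<lambda>f. \<bar>w$f\<bar> / \<bar>w'$f\<bar>) ` S)"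
    have finS: "finite ((\<lambda>f. \<bar>w$f\<bar> / \<bar>w'$f\<bar>) ` S)" "(\<lambda>f. \<bar>w$f\<bar> / \<bar>w'$f\<bar>) ` S \<noteq> {}" using Sne by auto
    obtain f0 where f0: "f0 \<in> S" "s = \<bar>w$f0\<bar> / \<bar>w'$f0\<bar>" using Min_in[OF finS] unfolding s_def by auto
    have spos: "0 < s" using f0 cw[OF f0(1)] by (auto simp: zero_less_mult_iff zero_less_divide_iff)
    have sle: "s * \<bar>w'$f\<bar> \<le> \<bar>w$f\<bar>" if "f \<in> S" for f
    proof -
      have "s \<le> \<bar>w$f\<bar> / \<bar>w'$f\<bar>" unfolding s_def using finS that by (auto intro!: Min_le)
      moreover have "0 < \<bar>w'$f\<bar>" using that unfolding S_def by auto
      ultimately show ?thesis by (simp add: pos_le_divide_eq)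
    qed
    define d where "d = w - s *\<^sub>R w'"
    have dV: "d \<in> row_space M" unfolding d_def using wV w'V
      by (simp add: subspace_diff[OF subspace_row] subspace_scale[OF subspace_row])
    have dcoord: "\<bar>d$f\<bar> = \<bar>w$f\<bar> - s * \<bar>w'$f\<bar>" for f
    proof (cases "f \<in> S")
      case False thus ?thesis unfolding d_def S_def by simp
    next
      case True
      define t where "t = s * w'$f"
      have t1: "\<bar>t\<bar> \<le> \<bar>w$f\<bar>" using sle[OF True] spos unfolding t_def by (simp add: abs_mult)
      have t2: "0 < t * w$f" using cw[OF True] spos unfolding t_def by (simp add: mult.assoc)
      have "\<bar>w$f - t\<bar> = \<bar>w$f\<bar> - \<bar>t\<bar>" using t1 t2
        by (cases "0 < t"; cases "0 < w$f") (auto simp: zero_less_mult_iff)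
      thus ?thesis unfolding d_def t_def using spos by (simp add: abs_mult)
    qed
    have l1d: "l1 d = l1 w - s * l1 w'" unfolding l1_def dcoord
      by (simp add: sum_subtractf sum_distrib_left)
    show ?thesis
    proof
      fix x assume x: "x \<in> Fw M w"
      hence xV: "x \<in> voronoi_cell M" and xw: "w \<bullet> x = l1 w / 2" unfolding Fw_def by auto
      have "2 * (x \<bullet> d) \<le> l1 d" using xV dV unfolding vor_iff[OF TU] by auto
      moreover have "x \<bullet> d = x \<bullet> w - s * (x \<bullet> w')" unfolding d_def by (simp add: inner_diff_right)
      ultimately have "s * l1 w' \<le> s * (2 * (x \<bullet> w'))" using xw l1d by (simp add: inner_commute algebra_simps)
      hence ge: "l1 w' \<le> 2 * (x \<bullet> w')" using spos by simp
      have le: "2 * (x \<bullet> w') \<le> l1 w'" using xV w'V unfolding vor_iff[OF TU] by auto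
      show "x \<in> Fw M w'" unfolding Fw_def using xV ge le by (auto simp: inner_commute)
    qed
  qed
qed

definition sgnint :: "real \<Rightarrow> int" where
  "sgnint r = (if 0 < r then 1 else if r < 0 then -1 else 0)"

definition key :: "real^'e \<Rightarrow> 'e set \<times> ('e \<Rightarrow> int)" where
  "key w = (spt w, \<lambda>f. sgnint (w$f))"

lemma of_int_sgnint[simp]: "real_of_int (sgnint r) = sgn r"
  by (simp add: sgnint_def sgn_if)

lemma sgnint_pw: "(a \<noteq> 0 \<longrightarrow> b \<noteq> 0 \<and> sgnint a = sgnint b) \<longleftrightarrow> (a = 0 \<or> 0 < a * (b::real))"
  by (cases "0 < a"; cases "a < 0"; cases "0 < b"; cases "b < 0")
     (auto simp: sgnint_def zero_less_mult_iff)

lemma sgnint_eq: "sgnint a = sgnint b \<longleftrightarrow> (a = 0 \<or> 0 < a * (b::real)) \<and> (b = 0 \<or> 0 < b * a)"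
  by (cases "0 < a"; cases "a < 0"; cases "0 < b"; cases "b < 0")
     (auto simp: sgnint_def zero_less_mult_iff)

lemma cac_le_key: "cac_le (key w) (key w') \<longleftrightarrow> conf w' w"
proof -
  have "cac_le (key w) (key w') \<longleftrightarrow> (\<forall>f. w'$f \<noteq> 0 \<longrightarrow> w$f \<noteq> 0 \<and> sgnint (w'$f) = sgnint (w$f))"
    unfolding cac_le_def key_def spt_def by auto
  also have "\<dots> \<longleftrightarrow> conf w' w" unfolding conf_def using sgnint_pw by blast
  finally show ?thesis .
qed

lemma key_eq: "key w = key w' \<longleftrightarrow> conf w w' \<and> conf w' w"
proof -
  have "key w = key w' \<longleftrightarrow> (\<forall>f. sgnint (w$f) = sgnint (w'$f))"
  proof
    assume "key w = key w'"
    hence "(\<lambda>f. sgnint (w$f)) = (\<lambda>f. sgnint (w'$f))" unfolding key_def by simp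
    thus "\<forall>f. sgnint (w$f) = sgnint (w'$f)" by metis
  next
    assume h: "\<forall>f. sgnint (w$f) = sgnint (w'$f)"
    have "spt w = spt w'" unfolding spt_def
    proof (intro Set.set_eqI iffI; simp)
      fix f
      show "w$f \<noteq> 0 \<Longrightarrow> w'$f \<noteq> 0" using h[rule_format, of f] by (auto simp: sgnint_def split: if_splits)
      show "w'$f \<noteq> 0 \<Longrightarrow> w$f \<noteq> 0" using h[rule_format, of f] by (auto simp: sgnint_def split: if_splits)
    qed
    thus "key w = key w'" using h unfolding key_def by auto
  qed
  also have "\<dots> \<longleftrightarrow> conf w w' \<and> conf w' w" unfolding conf_def sgnint_eq by blast
  finally show ?thesis .
qed

lemma cac_of_w:
  fixes M :: "real^'e^'r"
  assumes TU: "totally_unimodular M" and wV: "w \<in> row_space M"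
  shows "key w \<in> CAC M"
proof -
  have os: "oriented_sub (key w)" unfolding oriented_sub_def key_def spt_def by (auto simp: sgnint_def)
  have "\<exists>z :: real^'e. (\<forall>f. z $ f \<in> \<int> \<and> z $ f \<ge> 0) \<and> (\<forall>f. f \<notin> spt w \<longrightarrow> z $ f = 0) \<and>
        axis e 1 + z \<in> row_space (reorient M (spt w) (\<lambda>f. sgnint (w$f))) \<inter> integer_vectors"
    if e: "e \<in> spt w" for e
  proof -
    have we: "w$e \<noteq> 0" using e unfolding spt_def by auto
    obtain u :: "real^'e" where u: "u \<in> row_space M" "\<forall>f. u$f \<in> {-1,0,1}" "conf u w" "u$e = sgn (w$e)"
      using unit_vec[OF TU wV we] by blast
    have uabs: "\<bar>u$f\<bar> \<in> {0,1}" for f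
    proof -
      have "u$f \<in> {-1,0,1}" using u(2) by blast
      thus ?thesis by auto
    qed
    have uout: "u$f = 0" if "f \<notin> spt w" for f using u(3) that unfolding conf_def spt_def by auto
    define z :: "real^'e" where "z = (\<chi> f. if f = e then 0 else \<bar>u$f\<bar>)"
    have z1: "\<forall>f. z $ f \<in> \<int> \<and> z $ f \<ge> 0" unfolding z_def using uabs by (auto simp: insert_iff)
      (metis Ints_0 Ints_1 insertE singletonD uabs)
    have z2: "\<forall>f. f \<notin> spt w \<longrightarrow> z $ f = 0" unfolding z_def using uout by auto
    have ue: "\<bar>u$e\<bar> = 1" using u(4) we by (auto simp: sgn_if)
    have az: "axis e 1 + z = (\<chi> f. \<bar>u$f\<bar>)"
      unfolding z_def axis_def Finite_Cartesian_Product.vec_eq_iff using ue by auto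
    obtain c where c: "\<forall>f. u$f = (\<Sum>r\<in>UNIV. c $ r * M $ r $ f)" using u(1) unfolding row_space_def by auto
    have absu: "\<bar>u$f\<bar> = (if f \<in> spt w then of_int (sgnint (w$f)) else 1) * u$f" for f
    proof (cases "f \<in> spt w")
      case True
      have "u$f = 0 \<or> 0 < u$f * w$f" using u(3) unfolding conf_def by auto
      thus ?thesis using True by (auto simp: sgn_if zero_less_mult_iff)
    next
      case False thus ?thesis using uout by simp
    qed
    have "(\<chi> f. \<bar>u$f\<bar>) \<in> row_space (reorient M (spt w) (\<lambda>f. sgnint (w$f)))"
      unfolding row_space_def reorient_def
    proof (intro CollectI exI[of _ c] allI)
      fix f
      have "(\<chi> f. \<bar>u$f\<bar>) $ f = (if f \<in> spt w then of_int (sgnint (w$f)) else 1) * (\<Sum>r\<in>UNIV. c $ r * M $ r $ f)"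
        using absu c by simp
      also have "\<dots> = (\<Sum>r\<in>UNIV. c $ r * ((if f \<in> spt w then of_int (sgnint (w$f)) else 1) * M $ r $ f))"
        by (simp add: sum_distrib_left algebra_simps)
      finally show "(\<chi> f. \<bar>u$f\<bar>) $ f = (\<Sum>r\<in>UNIV. c $ r * (\<chi> r e. (if e \<in> spt w then real_of_int (sgnint (w $ e)) else 1) * M $ r $ e) $ r $ f)"
        by simp
    qed
    moreover have "(\<chi> f. \<bar>u$f\<bar>) \<in> integer_vectors" unfolding integer_vectors_def
      using uabs by (auto) (metis Ints_0 Ints_1 insertE singletonD uabs)
    ultimately show ?thesis using z1 z2 az by (intro exI[of _ z]) auto
  qed
  hence "coherent_acyclic M (key w)" unfolding coherent_acyclic_def using os
    by (simp add: key_def)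
  thus ?thesis unfolding CAC_def by simp
qed

lemma w_of_cac:
  fixes M :: "real^'e^'r"
  assumes Se: "Se \<in> CAC M"
  shows "\<exists>w\<in>row_space M. key w = Se"
proof -
  obtain S \<epsilon> where SE: "Se = (S, \<epsilon>)" by (cases Se)
  have ca: "coherent_acyclic M (S, \<epsilon>)" using Se SE unfolding CAC_def by simp
  have os1: "\<forall>f\<in>S. \<epsilon> f \<in> {1, -1}" and os2: "\<forall>f. f \<notin> S \<longrightarrow> \<epsilon> f = 0"
    using ca unfolding coherent_acyclic_def oriented_sub_def by auto
  have "\<forall>e\<in>S. \<exists>z :: real^'e. (\<forall>f. z $ f \<in> \<int> \<and> z $ f \<ge> 0) \<and> (\<forall>f. f \<notin> S \<longrightarrow> z $ f = 0) \<and>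
        axis e 1 + z \<in> row_space (reorient M S \<epsilon>) \<inter> integer_vectors"
    using ca unfolding coherent_acyclic_def by simp
  then obtain zz where zz: "\<And>e. e \<in> S \<Longrightarrow> (\<forall>f. zz e $ f \<in> \<int> \<and> zz e $ f \<ge> 0) \<and> (\<forall>f. f \<notin> S \<longrightarrow> zz e $ f = 0) \<and>
        axis e 1 + zz e \<in> row_space (reorient M S \<epsilon>) \<inter> integer_vectors"
    by metis
  define ep :: "'e \<Rightarrow> real" where "ep f = (if f \<in> S then real_of_int (\<epsilon> f) else 1)" for f
  have ep2: "ep f * ep f = 1" for f using os1 unfolding ep_def by auto
  define xx where "xx e = axis e 1 + zz e" for e
  define y where "y e = (\<chi> f. ep f * xx e $ f)" for e
  have yV: "y e \<in> row_space M" if e: "e \<in> S" for e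
  proof -
    obtain c where c: "\<forall>f. xx e $ f = (\<Sum>r\<in>UNIV. c $ r * reorient M S \<epsilon> $ r $ f)"
      using zz[OF e] unfolding xx_def row_space_def by auto
    show ?thesis unfolding row_space_def
    proof (intro CollectI exI[of _ c] allI)
      fix f
      have "y e $ f = ep f * (\<Sum>r\<in>UNIV. c $ r * (ep f * M $ r $ f))"
        unfolding y_def using c by (simp add: reorient_def ep_def)
      also have "\<dots> = (\<Sum>r\<in>UNIV. (ep f * ep f) * (c $ r * M $ r $ f))"
        by (simp add: sum_distrib_left algebra_simps)
      finally show "y e $ f = (\<Sum>r\<in>UNIV. c $ r * M $ r $ f)" using ep2 by simp
    qed
  qed
  define w where "w = (\<Sum>e\<in>S. y e)"
  have wV: "w \<in> row_space M" unfolding w_def by (rule subspace_sum[OF subspace_row]) (use yV in auto)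
  have xxnn: "0 \<le> xx e $ f" if "e \<in> S" for e f using zz[OF that] unfolding xx_def axis_def by auto
  have wf: "w $ f = ep f * (\<Sum>e\<in>S. xx e $ f)" for f unfolding w_def y_def by (simp add: sum_distrib_left)
  have wout: "w $ f = 0" if "f \<notin> S" for f
  proof -
    have "xx e $ f = 0" if "e \<in> S" for e using zz[OF that] \<open>f \<notin> S\<close> that unfolding xx_def axis_def by auto
    thus ?thesis using wf by simp
  qed
  have win: "sgnint (w $ f) = \<epsilon> f" if f: "f \<in> S" for f
  proof -
    have "1 \<le> xx f $ f" using zz[OF f] unfolding xx_def axis_def by auto
    also have "xx f $ f \<le> (\<Sum>e\<in>S. xx e $ f)" using f xxnn by (intro member_le_sum) auto
    finally have pos: "0 < (\<Sum>e\<in>S. xx e $ f)" by simp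
    show ?thesis using os1 f pos unfolding wf ep_def
      by (auto simp: sgnint_def zero_less_mult_iff mult_less_0_iff)
  qed
  have "spt w = S" unfolding spt_def
  proof (intro Set.set_eqI iffI; simp)
    fix f show "w $ f \<noteq> 0 \<Longrightarrow> f \<in> S" using wout by auto
    assume fS: "f \<in> S"
    have "sgnint (w$f) = \<epsilon> f" using win[OF fS] .
    moreover have "\<epsilon> f \<noteq> 0" using os1 fS by auto
    ultimately show "w $ f \<noteq> 0" by (auto simp: sgnint_def)
  qed
  moreover have "(\<lambda>f. sgnint (w$f)) = \<epsilon>"
  proof
    fix f show "sgnint (w$f) = \<epsilon> f" using win wout os2 by (cases "f \<in> S") (auto simp: sgnint_def)
  qed
  ultimately show ?thesis using wV SE unfolding key_def by auto
qed

theorem mainTheorem2: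
  fixes M :: "real^'e^'r"
  assumes "totally_unimodular M"
  shows "poset_isomorphic (face_poset M) (\<subseteq>) (CAC M) cac_le"
proof -
  note TU = assms
  define wof where "wof F = (SOME w. w \<in> row_space M \<and> F = Fw M w)" for F
  have wof: "wof F \<in> row_space M \<and> F = Fw M (wof F)" if "F \<in> face_poset M" for F
  proof -
    have "\<exists>w. w \<in> row_space M \<and> F = Fw M w" using face_Fw[OF TU] that unfolding face_poset_def by blast
    thus ?thesis unfolding wof_def by (rule someI_ex)
  qed
  define phi where "phi F = key (wof F)" for F
  have ord: "F \<subseteq> G \<longleftrightarrow> cac_le (phi F) (phi G)" if F: "F \<in> face_poset M" and G: "G \<in> face_poset M" for F G
  proof -
    have "F \<subseteq> G \<longleftrightarrow> Fw M (wof F) \<subseteq> Fw M (wof G)" using wof[OF F] wof[OF G] by simp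
    also have "\<dots> \<longleftrightarrow> conf (wof G) (wof F)" using Fw_mono[OF TU] wof[OF F] wof[OF G] by blast
    also have "\<dots> \<longleftrightarrow> cac_le (phi F) (phi G)" unfolding phi_def cac_le_key ..
    finally show ?thesis .
  qed
  have refl: "cac_le x x" for x unfolding cac_le_def by auto
  have inj: "inj_on phi (face_poset M)"
  proof (rule inj_onI)
    fix F G assume F: "F \<in> face_poset M" and G: "G \<in> face_poset M" and eq: "phi F = phi G"
    have "F \<subseteq> G" using ord[OF F G] eq refl by simp
    moreover have "G \<subseteq> F" using ord[OF G F] eq refl by simp
    ultimately show "F = G" by blast
  qed
  have img: "phi ` face_poset M = CAC M"
  proof
    show "phi ` face_poset M \<subseteq> CAC M" unfolding phi_def using wof cac_of_w[OF TU] by blast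
  next
    show "CAC M \<subseteq> phi ` face_poset M"
    proof
      fix Se assume "Se \<in> CAC M"
      then obtain w where w: "w \<in> row_space M" "key w = Se" using w_of_cac by blast
      define F where "F = Fw M w"
      have F: "F \<in> face_poset M" unfolding face_poset_def F_def using Fw_face[OF TU w(1)] by blast
      have "Fw M (wof F) = Fw M w" using wof[OF F] F_def by simp
      hence "conf w (wof F) \<and> conf (wof F) w" using Fw_mono[OF TU] wof[OF F] w(1) by (metis order_refl)
      hence "phi F = Se" unfolding phi_def using key_eq w(2) by metis
      thus "Se \<in> phi ` face_poset M" using F by blast
    qed
  qed
  show ?thesis unfolding poset_isomorphic_def bij_betw_def using inj img ord by blast
qed


end
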